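(* In the roundabout exploration process described in the context, for every $t\in[N]$, \[\sum_{a_i\in A(t)}|D_i(t)|\le 2N-|A(t)|.\]
   Context: Let $n\ge 2$ and $k$ be natural numbers, $T$ a tree on an $n$-element vertex set $V$, and $N=2(n-1)$. Fix a root $r$ and a DFS tour of $T$ starting and ending at $r$ that traverses each edge of $T$ exactly twice, giving a cyclic vertex sequence $(v_1,\dots,v_N,v_{N+1})$ with $v_{N+1}=v_1=r$, and tour edges $e_i=\{v_i,v_{i+1}\}$ for $i\in[N]$. For $i,j\in[N]$ the circular interval $[\![i,j]\!]$ is $\{i,i+1,\dots,j\}$ if $i\le j$ and $\{i,\dots,N,1,\dots,j\}$ if $i>j$. Let $\langle G_1,\dots,G_N\rangle$ be graphs on $V$, each containing all but at most $k$ edges of $T$. Roundabout exploration process: agents $a_1,\dots,a_N$ with initial states $s_i(0)=i$. For steps $t=1,\dots,N$: (Movement) for every $i\in[N]$, if $s_i(t-1)=q$ then $s_i(t)=(q\bmod N)+1$ if $e_q\in E(G_t)$, and $s_i(t)=q$ otherwise. Let $D_i(t)=[\![i,s_i(t)]\!]$ and $D_i(0)=\{i\}$. (Elimination) $A(0)=\{a_1,\dots,a_N\}$; $A(t)$ is obtained from $A(t-1)$ by repeatedly removing an arbitrary agent $a_i$ of the current set with $D_i(t)\subseteq\bigcup D_j(t)$ over the other agents $a_j$ of the current set, until no such agent remains. *)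

theory Defs
  imports Main
begin

definition all_edges :: "'a set \<Rightarrow> 'a set set" where
  "all_edges V = {{u, v} | u v. u \<in> V \<and> v \<in> V \<and> u \<noteq> v}"

definition graph_on :: "'a set \<Rightarrow> 'a set set \<Rightarrow> bool" where
  "graph_on V E \<longleftrightarrow> finite V \<and> E \<subseteq> all_edges V"

definition adj_rel :: "'a set set \<Rightarrow> ('a \<times> 'a) set" where
  "adj_rel E = {(x, y). {x, y} \<in> E}"

definition connected_graph :: "'a set \<Rightarrow> 'a set set \<Rightarrow> bool" where
  "connected_graph V E \<longleftrightarrow> (\<forall>u\<in>V. \<forall>w\<in>V. (u, w) \<in> (adj_rel E)\<^sup>*)"

definition is_cycle :: "'a set set \<Rightarrow> 'a list \<Rightarrow> bool" where
  "is_cycle E xs \<longleftrightarrow> length xs \<ge> 3 \<and> distinct xs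
     \<and> (\<forall>i. Suc i < length xs \<longrightarrow> {xs ! i, xs ! Suc i} \<in> E)
     \<and> {last xs, hd xs} \<in> E"

definition tree_on :: "'a set \<Rightarrow> 'a set set \<Rightarrow> bool" where
  "tree_on V E \<longleftrightarrow> graph_on V E \<and> connected_graph V E \<and> (\<nexists>xs. is_cycle E xs)"

definition dfs_tour :: "'a set set \<Rightarrow> 'a \<Rightarrow> nat \<Rightarrow> (nat \<Rightarrow> 'a) \<Rightarrow> bool" where
  "dfs_tour ET r N v \<longleftrightarrow> v 1 = r \<and> v (N + 1) = r
     \<and> (\<forall>i\<in>{1..N}. {v i, v (Suc i)} \<in> ET)
     \<and> (\<forall>e\<in>ET. card {i\<in>{1..N}. {v i, v (Suc i)} = e} = 2)"

definition tour_edge :: "(nat \<Rightarrow> 'a) \<Rightarrow> nat \<Rightarrow> 'a set" where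
  "tour_edge v i = {v i, v (Suc i)}"

fun state :: "nat \<Rightarrow> (nat \<Rightarrow> 'a) \<Rightarrow> (nat \<Rightarrow> 'a set set) \<Rightarrow> nat \<Rightarrow> nat \<Rightarrow> nat" where
  "state N v G i 0 = i"
| "state N v G i (Suc t) =
     (let q = state N v G i t in
      if tour_edge v q \<in> G (Suc t) then (q mod N) + 1 else q)"

definition cint :: "nat \<Rightarrow> nat \<Rightarrow> nat \<Rightarrow> nat set" where
  "cint N i j = (if i \<le> j then {i..j} else {i..N} \<union> {1..j})"

definition Dset :: "nat \<Rightarrow> (nat \<Rightarrow> 'a) \<Rightarrow> (nat \<Rightarrow> 'a set set) \<Rightarrow> nat \<Rightarrow> nat \<Rightarrow> nat set" where
  "Dset N v G i t = (if t = 0 then {i} else cint N i (state N v G i t))"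

definition elim_step :: "(nat \<Rightarrow> nat set) \<Rightarrow> (nat set \<times> nat set) set" where
  "elim_step D = {(B, B'). \<exists>i\<in>B. D i \<subseteq> (\<Union>j\<in>B - {i}. D j) \<and> B' = B - {i}}"

definition elim_result :: "(nat \<Rightarrow> nat set) \<Rightarrow> nat set \<Rightarrow> nat set \<Rightarrow> bool" where
  "elim_result D B B' \<longleftrightarrow> (B, B') \<in> (elim_step D)\<^sup>* \<and> (\<nexists>B''. (B', B'') \<in> elim_step D)"

end

theory Submission
  imports Defs
begin

lemma modsmall:
  fixes d :: int and N :: nat
  assumes "- int N < d" "d < int N"
  shows "d mod int N = (if 0 \<le> d then d else d + int N)"
proof (cases "0 \<le> d")
  case True then show ?thesis using assms by simp
next
  case False
  have "d mod int N = (d + int N) mod int N" by simp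
  also have "\<dots> = d + int N" using assms False by (intro mod_pos_pos_trivial) auto
  finally show ?thesis using False by simp
qed

lemma cint_sub: "cint N i j \<subseteq> {1..N}" if "i \<in> {1..N}" "j \<in> {1..N}"
  using that by (auto simp: cint_def)

lemma cint_memb:
  assumes "i \<in> {1..N}" "j \<in> {1..N}" "x \<in> {1..N}"
  shows "x \<in> cint N i j \<longleftrightarrow> (int x - int i) mod int N \<le> (int j - int i) mod int N"
proof -
  have e1: "(int x - int i) mod int N = (if 0 \<le> int x - int i then int x - int i else int x - int i + int N)"
    using assms by (intro modsmall) auto
  have e2: "(int j - int i) mod int N = (if 0 \<le> int j - int i then int j - int i else int j - int i + int N)"
    using assms by (intro modsmall) auto
  show ?thesis unfolding e1 e2 using assms by (auto simp: cint_def)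
qed

lemma recenter:
  fixes i j p x :: nat
  assumes "i \<in> {1..N}" "j \<in> {1..N}" "x \<in> {1..N}" "p \<in> {1..N}"
    and "(int p - int i) mod int N \<le> (int j - int i) mod int N"
  shows "(int x - int i) mod int N \<le> (int j - int i) mod int N \<longleftrightarrow>
     ((int x - int p) mod int N \<le> (int j - int p) mod int N \<or> (int p - int x) mod int N \<le> (int p - int i) mod int N)"
proof -
  have M: "\<And>a b. a \<in> {1..N} \<Longrightarrow> b \<in> {1..N} \<Longrightarrow> (int a - int b) mod int N = (if 0 \<le> int a - int b then int a - int b else int a - int b + int N)"
    by (intro modsmall) auto
  show ?thesis using assms(5) unfolding M[OF assms(3) assms(1)] M[OF assms(2) assms(1)]
      M[OF assms(4) assms(1)] M[OF assms(3) assms(4)] M[OF assms(2) assms(4)] M[OF assms(4) assms(3)]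
    using assms(1-4) by (simp split: if_splits)
qed


lemma core:
  fixes N :: nat and B :: "nat set" and s :: "nat \<Rightarrow> nat" and D :: "nat \<Rightarrow> nat set"
  assumes N: "N > 0" and B: "B \<subseteq> {1..N}" and sr: "\<forall>i\<in>B. s i \<in> {1..N}"
    and D: "\<forall>i\<in>B. D i = cint N i (s i)"
    and nc: "\<not> (\<exists>i\<in>B. D i \<subseteq> (\<Union>j\<in>B - {i}. D j))"
  shows "(\<Sum>i\<in>B. card (D i)) + card B \<le> 2 * N"
proof -
  have finB: "finite B" using B finite_subset by blast
  have Dsub: "\<And>i. i \<in> B \<Longrightarrow> D i \<subseteq> {1..N}" using D sr B cint_sub by blast
  define m where "m p = card {i\<in>B. p \<in> D i}" for p
  have m2: "m p \<le> 2" if p: "p \<in> {1..N}" for p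
  proof (rule ccontr)
    assume "\<not> m p \<le> 2"
    define S where "S = {i\<in>B. p \<in> D i}"
    have c3: "3 \<le> card S" using \<open>\<not> m p \<le> 2\<close> unfolding m_def S_def by simp
    have finS: "finite S" using finB S_def by simp
    have neS: "S \<noteq> {}" using c3 by auto
    define a where "a i = (int p - int i) mod int N" for i
    define b where "b i = (int (s i) - int p) mod int N" for i
    have "Max (a ` S) \<in> a ` S" by (rule Max_in) (use finS neS in auto)
    then obtain L where L: "L \<in> S" "a L = Max (a ` S)" by force
    have "Max (b ` S) \<in> b ` S" by (rule Max_in) (use finS neS in auto)
    then obtain R where R: "R \<in> S" "b R = Max (b ` S)" by force
    have "card S - card {L,R} \<le> card (S - {L,R})" by (rule diff_card_le_card_Diff) simp
    moreover have "card {L,R} \<le> 2" by (simp add: card_insert_le_m1)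
    ultimately have "S - {L,R} \<noteq> {}" using c3 by (cases "S - {L,R} = {}") auto
    then obtain k where k: "k \<in> S" "k \<noteq> L" "k \<noteq> R" by blast
    have inS: "\<And>i. i \<in> S \<Longrightarrow> i \<in> B \<and> p \<in> D i" using S_def by simp
    have pin: "\<And>i. i \<in> S \<Longrightarrow> a i \<le> (int (s i) - int i) mod int N"
    proof -
      fix i assume iS: "i \<in> S"
      have iB: "i \<in> B" using inS iS by blast
      have i1: "i \<in> {1..N}" using iB B by blast
      have s1: "s i \<in> {1..N}" using iB sr by blast
      have "p \<in> cint N i (s i)" using inS[OF iS] D iB by simp
      then show "a i \<le> (int (s i) - int i) mod int N" using cint_memb[OF i1 s1 p] a_def by simp
    qed
    have memb: "\<And>i x. i \<in> S \<Longrightarrow> x \<in> {1..N} \<Longrightarrow>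
       x \<in> D i \<longleftrightarrow> ((int x - int p) mod int N \<le> b i \<or> (int p - int x) mod int N \<le> a i)"
    proof -
      fix i x assume iS: "i \<in> S" and x: "x \<in> {1..N}"
      have iB: "i \<in> B" using inS iS by blast
      have i1: "i \<in> {1..N}" using iB B by blast
      have s1: "s i \<in> {1..N}" using iB sr by blast
      show "x \<in> D i \<longleftrightarrow> ((int x - int p) mod int N \<le> b i \<or> (int p - int x) mod int N \<le> a i)"
        using cint_memb[OF i1 s1 x] recenter[OF i1 s1 x p pin[OF iS, unfolded a_def]] D iB a_def b_def
        by simp
    qed
    have aL: "a k \<le> a L" unfolding L(2) by (rule Max_ge) (use finS k in auto)
    have bR: "b k \<le> b R" unfolding R(2) by (rule Max_ge) (use finS k in auto)
    have "D k \<subseteq> D L \<union> D R"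
    proof
      fix x assume xk: "x \<in> D k"
      have x1: "x \<in> {1..N}" using Dsub inS k xk by blast
      show "x \<in> D L \<union> D R" using memb[OF k(1) x1] memb[OF L(1) x1] memb[OF R(1) x1] xk aL bR
        by auto
    qed
    then have "D k \<subseteq> (\<Union>j\<in>B - {k}. D j)" using inS L R k by blast
    then show False using nc inS k by blast
  qed
  have priv: "\<forall>i\<in>B. \<exists>p. p \<in> D i \<and> (\<forall>j\<in>B - {i}. p \<notin> D j)" using nc by blast
  then obtain pv where pv: "\<And>i. i \<in> B \<Longrightarrow> pv i \<in> D i \<and> (\<forall>j\<in>B - {i}. pv i \<notin> D j)" by metis
  define P1 where "P1 = {p\<in>{1..N}. m p = 1}"
  have "inj_on pv B"
  proof (rule inj_onI)
    fix i j assume ij: "i \<in> B" "j \<in> B" "pv i = pv j"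
    show "i = j"
    proof (rule ccontr)
      assume "i \<noteq> j"
      then have "pv j \<notin> D i" using pv[OF ij(2)] ij(1) by blast
      then show False using pv[OF ij(1)] ij(3) by simp
    qed
  qed
  moreover have "pv ` B \<subseteq> P1"
  proof
    fix p assume "p \<in> pv ` B"
    then obtain i where i: "i \<in> B" "p = pv i" by blast
    have "{j\<in>B. p \<in> D j} = {i}" using pv[OF i(1)] i by blast
    moreover have "p \<in> {1..N}" using Dsub[OF i(1)] pv[OF i(1)] i(2) by blast
    ultimately show "p \<in> P1" using P1_def m_def by simp
  qed
  ultimately have cB: "card B \<le> card P1"
    by (rule card_inj_on_le) (auto simp: P1_def)
  have swap: "(\<Sum>i\<in>B. card (D i)) = (\<Sum>p\<in>{1..N}. m p)"
  proof -
    have "(\<Sum>i\<in>B. card (D i)) = (\<Sum>i\<in>B. \<Sum>p\<in>{1..N}. if p \<in> D i then 1 else 0)"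
    proof (rule sum.cong[OF refl])
      fix i assume "i \<in> B"
      then have e: "D i = {p\<in>{1..N}. p \<in> D i}" using Dsub by blast
      have "card {p\<in>{1..N}. p \<in> D i} = (\<Sum>p\<in>{1..N}. if p \<in> D i then 1 else 0)"
        by (simp add: sum.inter_filter[symmetric])
      then show "card (D i) = (\<Sum>p\<in>{1..N}. if p \<in> D i then 1 else 0)" using e by simp
    qed
    also have "\<dots> = (\<Sum>p\<in>{1..N}. \<Sum>i\<in>B. if p \<in> D i then 1 else 0)" by (rule sum.swap)
    also have "\<dots> = (\<Sum>p\<in>{1..N}. m p)"
      by (rule sum.cong[OF refl]) (simp add: m_def sum.inter_filter[symmetric] finB)
    finally show ?thesis .
  qed
  have "(\<Sum>p\<in>{1..N}. m p) \<le> (\<Sum>p\<in>{1..N}. if m p = 1 then 1 else 2)"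
    using m2 by (intro sum_mono) auto
  moreover have "(\<Sum>p\<in>{1..N}. (if m p = 1 then 1 else 2)) + card P1 = 2 * N"
  proof -
    have "card P1 = (\<Sum>p\<in>{1..N}. if m p = 1 then 1 else 0)"
      unfolding P1_def by (simp add: sum.inter_filter[symmetric])
    then have "(\<Sum>p\<in>{1..N}. (if m p = 1 then 1 else 2)) + card P1
        = (\<Sum>p\<in>{1..N}. (if m p = 1 then 1 else 2) + (if m p = 1 then 1 else 0))"
      by (simp add: sum.distrib)
    also have "\<dots> = (\<Sum>p\<in>{1..N}. (2::nat))" by (intro sum.cong) auto
    finally show ?thesis by simp
  qed
  ultimately show ?thesis using swap cB by linarith
qed


lemma state_range: "N > 0 \<Longrightarrow> i \<in> {1..N} \<Longrightarrow> state N v G i t \<in> {1..N}"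
  by (induction t) (auto simp: Let_def Suc_le_eq)

lemma elim_star_sub: "(B, B') \<in> (elim_step D)\<^sup>* \<Longrightarrow> B' \<subseteq> B"
  by (induction rule: rtrancl_induct) (auto simp: elim_step_def)

theorem lemma7:
  fixes V :: "'a set" and n k N :: nat and ET :: "'a set set" and r :: 'a
    and v :: "nat \<Rightarrow> 'a" and G :: "nat \<Rightarrow> 'a set set" and A :: "nat \<Rightarrow> nat set"
  assumes "finite V" and "card V = n" and "n \<ge> 2"
    and "tree_on V ET"
    and "N = 2 * (n - 1)"
    and "r \<in> V"
    and "dfs_tour ET r N v"
    and "\<forall>t\<in>{1..N}. graph_on V (G t) \<and> card (ET - G t) \<le> k"
    and "A 0 = {1..N}"
    and "\<forall>t\<in>{1..N}. elim_result (\<lambda>i. Dset N v G i t) (A (t - 1)) (A t)"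
  shows "\<forall>t\<in>{1..N}. (\<Sum>i\<in>A t. card (Dset N v G i t)) \<le> 2 * N - card (A t)"
proof
  have N: "N > 0" using assms(3,5) by simp
  have Asub: "t \<le> N \<Longrightarrow> A t \<subseteq> {1..N}" for t
  proof (induction t)
    case 0 then show ?case using assms(9) by simp
  next
    case (Suc t)
    have "elim_result (\<lambda>i. Dset N v G i (Suc t)) (A t) (A (Suc t))"
      using assms(10) Suc.prems by (metis atLeastAtMost_iff diff_Suc_1 le_add1 plus_1_eq_Suc)
    then have "A (Suc t) \<subseteq> A t" unfolding elim_result_def using elim_star_sub by blast
    then show ?case using Suc by simp
  qed
  fix t assume t: "t \<in> {1..N}"
  have er: "elim_result (\<lambda>i. Dset N v G i t) (A (t - 1)) (A t)" using assms(10) t by blast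
  have B: "A t \<subseteq> {1..N}" using Asub t by simp
  have "(\<Sum>i\<in>A t. card (Dset N v G i t)) + card (A t) \<le> 2 * N"
  proof (rule core[where s = "\<lambda>i. state N v G i t"])
    show "0 < N" by (rule N)
    show "A t \<subseteq> {1..N}" by (rule B)
    show "\<forall>i\<in>A t. state N v G i t \<in> {1..N}" using B state_range[OF N] by blast
    show "\<forall>i\<in>A t. Dset N v G i t = cint N i (state N v G i t)" using t by (simp add: Dset_def)
    show "\<not> (\<exists>i\<in>A t. Dset N v G i t \<subseteq> (\<Union>j\<in>A t - {i}. Dset N v G j t))"
    proof
      assume "\<exists>i\<in>A t. Dset N v G i t \<subseteq> (\<Union>j\<in>A t - {i}. Dset N v G j t)"
      then obtain i where "i \<in> A t" "Dset N v G i t \<subseteq> (\<Union>j\<in>A t - {i}. Dset N v G j t)" by blast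
      then have "(A t, A t - {i}) \<in> elim_step (\<lambda>i. Dset N v G i t)" unfolding elim_step_def by blast
      then show False using er unfolding elim_result_def by blast
    qed
  qed
  then show "(\<Sum>i\<in>A t. card (Dset N v G i t)) \<le> 2 * N - card (A t)" by linarith
qed

end
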